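(* Let $\{c_k\}_{k\ge1}$ be i.i.d. random variables whose common distribution is absolutely continuous on $[0,1]$ with almost everywhere positive and uniformly bounded density, let $\lambda>0$ and $l_k=e^{-\lambda k}$, and let $q(n)=\lfloor\log_2(\log n)\rfloor$. Then almost surely the following holds: for every $\varepsilon>0$, for all sufficiently large $n$ and all $i\ne j$ in $\mathcal{A}_{n,q(n)}$, $\frac{l_i+l_j}{2|c_i-c_j|}<\varepsilon$.
   Context: $\mathcal{A}_n=\{n,\dots,2n-1\}$ and $\mathcal{A}_{n,q}=\mathcal{A}_n\cup\mathcal{A}_{2n}\cup\cdots\cup\mathcal{A}_{2^qn}$. *)

theory Defs
  imports "HOL-Probability.Probability"
begin

definition blockA :: "nat \<Rightarrow> nat set" where
  "blockA n = {n..<2*n}"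

definition blockAq :: "nat \<Rightarrow> nat \<Rightarrow> nat set" where
  "blockAq n q = (\<Union>m\<in>{0..q}. blockA (2^m * n))"

definition qfun :: "nat \<Rightarrow> nat" where
  "qfun n = nat \<lfloor>log 2 (ln (real n))\<rfloor>"

end

theory Submission imports Defs "HOL-Library.Landau_Symbols" "HOL-Real_Asymp.Real_Asymp" begin

lemma summ_aux:
  fixes a :: real assumes "a > 0"
  shows "summable (\<lambda>n. 2 * real n ^ 2 * (2 * B * exp (- a * real n)))"
proof (rule summable_comparison_test_bigo)
  show "summable (\<lambda>n. norm (1 / real n ^ 2))"
    using inverse_power_summable[of 2, where 'a=real] by (simp add: divide_inverse)
  show "(\<lambda>n. 2 * real n ^ 2 * (2 * B * exp (- a * real n))) \<in> O(\<lambda>n. 1 / real n ^ 2)"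
    using assms by real_asymp
qed

lemma close_prob:
  fixes X Y :: "'a \<Rightarrow> real"
  assumes P: "prob_space M" and ind: "prob_space.indep_var M borel X borel Y"
    and dY: "distributed M lborel Y (\<lambda>x. ennreal (g x))"
    and gB: "\<And>x. g x \<le> B" and g0: "\<And>x. g x \<ge> 0" and d: "d > 0"
  shows "measure M {\<omega> \<in> space M. \<bar>X \<omega> - Y \<omega>\<bar> < d} \<le> 2 * B * d"
proof -
  interpret prob_space M by fact
  have rvX[measurable]: "X \<in> borel_measurable M" using indep_var_rv1[OF ind] by simp
  have rvY[measurable]: "Y \<in> borel_measurable M" using indep_var_rv2[OF ind] by simp
  have B0: "B \<ge> 0" using gB[of 0] g0[of 0] by simp
  have gm[measurable]: "(\<lambda>x. ennreal (g x)) \<in> borel_measurable lborel"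
    using dY by (simp add: distributed_def)
  define D where "D = {p \<in> space (borel \<Otimes>\<^sub>M borel). \<bar>fst p - snd p\<bar> < (d::real)}"
  have Dm: "D \<in> sets (borel \<Otimes>\<^sub>M borel)" unfolding D_def by measurable
  let ?M1 = "distr M borel X" and ?M2 = "distr M borel Y"
  interpret M1: prob_space ?M1 by (rule prob_space_distr) simp
  interpret M2: prob_space ?M2 by (rule prob_space_distr) simp
  have eq: "{\<omega> \<in> space M. \<bar>X \<omega> - Y \<omega>\<bar> < d} = (\<lambda>\<omega>. (X \<omega>, Y \<omega>)) -` D \<inter> space M"
    by (auto simp: D_def space_pair_measure)
  have "emeasure M {\<omega> \<in> space M. \<bar>X \<omega> - Y \<omega>\<bar> < d}
      = emeasure (distr M (borel \<Otimes>\<^sub>M borel) (\<lambda>\<omega>. (X \<omega>, Y \<omega>))) D"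
    unfolding eq by (subst emeasure_distr) (auto simp: Dm)
  also have "distr M (borel \<Otimes>\<^sub>M borel) (\<lambda>\<omega>. (X \<omega>, Y \<omega>)) = ?M1 \<Otimes>\<^sub>M ?M2"
    using ind unfolding indep_var_distribution_eq by simp
  also have "emeasure (?M1 \<Otimes>\<^sub>M ?M2) D = (\<integral>\<^sup>+x. emeasure ?M2 (Pair x -` D) \<partial>?M1)"
    by (rule M2.emeasure_pair_measure_alt) (use Dm in simp)
  also have "\<dots> \<le> (\<integral>\<^sup>+x. ennreal (2 * B * d) \<partial>?M1)"
  proof (rule nn_integral_mono)
    fix x
    have pre: "Pair x -` D = {x - d <..< x + d}"
      by (auto simp: D_def space_pair_measure abs_less_iff)
    have "emeasure ?M2 (Pair x -` D) = emeasure M (Y -` {x - d <..< x + d} \<inter> space M)"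
      unfolding pre by (subst emeasure_distr) auto
    also have "\<dots> = emeasure (distr M lborel Y) {x - d <..< x + d}"
      by (subst emeasure_distr) auto
    also have "\<dots> = emeasure (density lborel (\<lambda>x. ennreal (g x))) {x - d <..< x + d}"
      using distributed_distr_eq_density[OF dY] by simp
    also have "\<dots> = (\<integral>\<^sup>+ y. ennreal (g y) * indicator {x - d <..< x + d} y \<partial>lborel)"
      by (rule emeasure_density) auto
    also have "\<dots> \<le> (\<integral>\<^sup>+ y. ennreal B * indicator {x - d <..< x + d} y \<partial>lborel)"
      by (intro nn_integral_mono) (auto simp: indicator_def gB intro!: ennreal_leI)
    also have "\<dots> = ennreal B * ennreal (2 * d)"
      using d by (subst nn_integral_cmult_indicator) auto
    also have "\<dots> = ennreal (2 * B * d)"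
      using B0 d by (simp add: ennreal_mult[symmetric] mult_ac)
    finally show "emeasure ?M2 (Pair x -` D) \<le> ennreal (2 * B * d)" .
  qed
  also have "\<dots> = ennreal (2 * B * d)"
    using M1.emeasure_space_1 by simp
  finally show ?thesis
    using B0 d by (simp add: emeasure_eq_measure)
qed


lemma pair_indep:
  assumes P: "prob_space M" and ind: "prob_space.indep_vars M (\<lambda>_. borel) c I"
    and "i \<in> I" "j \<in> I" "i \<noteq> j"
  shows "prob_space.indep_var M borel (c i) borel (c j)"
proof -
  interpret prob_space M by fact
  have "indep_var borel ((\<lambda>f. f i) \<circ> (\<lambda>\<omega>. restrict (\<lambda>i. c i \<omega>) {i}))
                  borel ((\<lambda>f. f j) \<circ> (\<lambda>\<omega>. restrict (\<lambda>i. c i \<omega>) {j}))"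
    using assms by (intro indep_var_compose[OF indep_var_restrict[OF ind]]) auto
  also have "((\<lambda>f. f i) \<circ> (\<lambda>\<omega>. restrict (\<lambda>i. c i \<omega>) {i})) = c i" by auto
  also have "((\<lambda>f. f j) \<circ> (\<lambda>\<omega>. restrict (\<lambda>i. c i \<omega>) {j})) = c j" by auto
  finally show ?thesis .
qed

lemma block_bound:
  assumes "n \<ge> 3" "k \<in> blockAq n (qfun n)"
  shows "n \<le> k \<and> k < 2 * n^2"
proof -
  obtain m where m: "m \<le> qfun n" "2^m * n \<le> k" "k < 2 * (2^m * n)"
    using assms(2) by (auto simp: blockAq_def blockA_def)
  have n3: "real n \<ge> 3" using assms(1) by simp
  have lnpos: "ln (real n) \<ge> 1"
  proof -
    have "exp 1 \<le> (3::real)" using exp_le by simp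
    also have "\<dots> \<le> real n" by fact
    finally show ?thesis using ln_ge_iff[of "real n" 1] n3 by simp
  qed
  have lg: "log 2 (ln (real n)) \<ge> 0" using lnpos by simp
  have "real (2^m) \<le> 2 powr (real (qfun n))"
    using m(1) by (simp add: powr_realpow[symmetric])
  also have "\<dots> \<le> 2 powr (log 2 (ln (real n)))"
    unfolding qfun_def using lg by (intro powr_mono) (auto simp: of_nat_nat)
  also have "\<dots> = ln (real n)" using lnpos by simp
  also have "\<dots> < real n" using n3 by (intro ln_less_self) auto
  finally have "2^m < n" by linarith
  then have "2^m * n < n * n" using assms(1) by simp
  have "n \<le> 2^m * n" by simp
  have a: "n \<le> k" using m(2) \<open>n \<le> 2^m * n\<close> by linarith
  have "k < 2 * (n * n)" using m(3) \<open>2^m * n < n * n\<close> by linarith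
  then show ?thesis using a by (simp add: power2_eq_square)
qed

theorem lemma2p2:
  fixes M :: "'a measure" and c :: "nat \<Rightarrow> 'a \<Rightarrow> real"
    and g :: "real \<Rightarrow> real" and lam :: real and l :: "nat \<Rightarrow> real"
  assumes "prob_space M"
    and "prob_space.indep_vars M (\<lambda>_. borel) c {1..}"
    and "g \<in> borel_measurable borel"
    and "\<And>x. g x \<ge> 0"
    and "\<And>x. x \<notin> {0..1} \<Longrightarrow> g x = 0"
    and "AE x in lborel. x \<in> {0..1} \<longrightarrow> g x > 0"
    and "\<exists>B. \<forall>x. g x \<le> B"
    and "\<And>k. k \<ge> 1 \<Longrightarrow> distributed M lborel (c k) (\<lambda>x. ennreal (g x))"
    and "lam > 0"
    and "\<And>k. l k = exp (- lam * real k)"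
  shows "AE \<omega> in M. \<forall>\<epsilon>>0. eventually (\<lambda>n. \<forall>i\<in>blockAq n (qfun n). \<forall>j\<in>blockAq n (qfun n).
            i \<noteq> j \<longrightarrow> l i + l j < \<epsilon> * (2 * \<bar>c i \<omega> - c j \<omega>\<bar>)) sequentially"
proof -
  interpret prob_space M by fact
  obtain B where gB: "\<And>x. g x \<le> B" using assms(7) by auto
  have rv: "c k \<in> borel_measurable M" if "k \<ge> 1" for k
    using distributed_measurable[OF assms(8)[OF that]] by simp
  define d where "d i = exp (- (lam/2) * real i)" for i :: nat
  have dpos: "d i > 0" for i by (simp add: d_def)
  define F where "F i = (\<Union>j\<in>{i<..2*i^2}. {\<omega> \<in> space M. \<bar>c i \<omega> - c j \<omega>\<bar> < d i})" for i :: nat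
  have Fm: "F i \<in> sets M" for i
  proof (cases "i = 0")
    case True then show ?thesis by (simp add: F_def)
  next
    case False
    then have [measurable]: "c i \<in> borel_measurable M" using rv by simp
    show ?thesis unfolding F_def
    proof (intro sets.finite_UN)
      fix j assume "j \<in> {i<..2*i^2}"
      then have [measurable]: "c j \<in> borel_measurable M" using rv by simp
      show "{\<omega> \<in> space M. \<bar>c i \<omega> - c j \<omega>\<bar> < d i} \<in> sets M" by measurable
    qed auto
  qed
  have Fb: "measure M (F i) \<le> 2 * real i ^ 2 * (2 * B * d i)" for i
  proof -
    have B0: "B \<ge> 0" using gB[of 0] assms(4)[of 0] by simp
    have each: "measure M {\<omega> \<in> space M. \<bar>c i \<omega> - c j \<omega>\<bar> < d i} \<le> 2 * B * d i"
      if "j \<in> {i<..2*i^2}" for j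
    proof (rule close_prob[OF assms(1) _ assms(8) gB assms(4) dpos])
      show "indep_var borel (c i) borel (c j)"
      proof (intro pair_indep[OF assms(1) assms(2)])
        show "i \<in> {1..}" using that by (cases i) auto
      qed (use that in auto)
      show "1 \<le> j" using that by simp
    qed
    have "measure M (F i) \<le> (\<Sum>j\<in>{i<..2*i^2}. measure M {\<omega> \<in> space M. \<bar>c i \<omega> - c j \<omega>\<bar> < d i})"
      unfolding F_def
    proof (rule measure_UNION_le)
      fix j assume j: "j \<in> {i<..2*i^2}"
      have i1: "i \<ge> 1" using j by (cases i) auto
      then have [measurable]: "c i \<in> borel_measurable M" "c j \<in> borel_measurable M"
        using rv j by auto
      show "{\<omega> \<in> space M. \<bar>c i \<omega> - c j \<omega>\<bar> < d i} \<in> sets M" by measurable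
    qed simp
    also have "\<dots> \<le> real (card {i<..2*i^2}) * (2 * B * d i)"
      using each by (intro sum_bounded_above) auto
    also have "\<dots> \<le> 2 * real i ^ 2 * (2 * B * d i)"
    proof (intro mult_right_mono)
      have "card {i<..2*i^2} \<le> 2*i^2" by simp
      then show "real (card {i<..2*i^2}) \<le> 2 * real i ^ 2"
        by (metis of_nat_le_iff of_nat_mult of_nat_numeral of_nat_power)
    qed (use B0 dpos[of i] in auto)
    finally show ?thesis .
  qed
  have summ: "summable (\<lambda>i. measure M (F i))"
  proof (rule summable_comparison_test)
    show "\<exists>N. \<forall>n\<ge>N. norm (measure M (F n)) \<le> 2 * real n ^ 2 * (2 * B * d n)"
      using Fb by auto
    show "summable (\<lambda>n. 2 * real n ^ 2 * (2 * B * d n))"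
      unfolding d_def using summ_aux[of "lam/2" B] assms(9) by simp
  qed
  have BC: "AE \<omega> in M. eventually (\<lambda>i. \<omega> \<in> space M - F i) sequentially"
    by (rule borel_cantelli_AE1[OF Fm _ summ]) (simp add: less_top[symmetric])
  have dlim: "d \<longlonglongrightarrow> 0" unfolding d_def using assms(9) by real_asymp
  show ?thesis
    using BC
  proof (rule AE_mp, intro AE_I2 impI allI)
    fix \<omega> and \<epsilon> :: real
    assume ev: "\<forall>\<^sub>F i in sequentially. \<omega> \<in> space M - F i" and \<omega>: "\<omega> \<in> space M"
      and eps: "\<epsilon> > 0"
    from ev obtain N0 where N0: "\<And>i. i \<ge> N0 \<Longrightarrow> \<omega> \<notin> F i"
      by (auto simp: eventually_sequentially)
    have sep: "d i \<le> \<bar>c i \<omega> - c j \<omega>\<bar>" if "i \<ge> N0" "i < j" "j \<le> 2*i^2" for i j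
      using N0[OF that(1)] \<omega> that(2,3) unfolding F_def by force
    have ev2: "\<forall>\<^sub>F n in sequentially. d n < \<epsilon>"
      using order_tendstoD(2)[OF dlim eps] .
    have ev3: "\<forall>\<^sub>F n in sequentially. n \<ge> max N0 3"
      by (rule eventually_ge_at_top)
    show "\<forall>\<^sub>F n in sequentially. \<forall>i\<in>blockAq n (qfun n). \<forall>j\<in>blockAq n (qfun n).
            i \<noteq> j \<longrightarrow> l i + l j < \<epsilon> * (2 * \<bar>c i \<omega> - c j \<omega>\<bar>)"
      using ev2 ev3
    proof eventually_elim
      case (elim n)
      have key: "l i + l j < \<epsilon> * (2 * \<bar>c i \<omega> - c j \<omega>\<bar>)"
        if i: "i \<in> blockAq n (qfun n)" and j: "j \<in> blockAq n (qfun n)" and ij: "i < j" for i j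
      proof -
        have bi: "n \<le> i" using block_bound[OF _ i] elim by auto
        have bj: "j < 2 * n^2" using block_bound[OF _ j] elim by auto
        have "n^2 \<le> i^2" using bi by (simp add: power_mono)
        then have j2: "j \<le> 2 * i^2" using bj by linarith
        have s: "d i \<le> \<bar>c i \<omega> - c j \<omega>\<bar>" using sep[OF _ ij j2] bi elim by auto
        have dmono: "d i \<le> d n" unfolding d_def using bi assms(9) by simp
        have li: "l i = d i * d i" unfolding d_def assms(10) by (simp add: exp_add[symmetric])
        have lj: "l j < l i" unfolding assms(10) using ij assms(9) by simp
        have "l i + l j < 2 * (d i * d i)" using li lj by linarith
        also have "\<dots> \<le> 2 * (\<epsilon> * d i)"
          using dmono elim dpos[of i] by (intro mult_left_mono mult_right_mono) auto
        also have "\<dots> \<le> 2 * (\<epsilon> * \<bar>c i \<omega> - c j \<omega>\<bar>)"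
          using s eps by (intro mult_left_mono) auto
        finally show ?thesis by simp
      qed
      show ?case
      proof (intro ballI impI)
        fix i j assume i: "i \<in> blockAq n (qfun n)" and j: "j \<in> blockAq n (qfun n)" and "i \<noteq> j"
        then consider "i < j" | "j < i" by linarith
        then show "l i + l j < \<epsilon> * (2 * \<bar>c i \<omega> - c j \<omega>\<bar>)"
        proof cases
          case 1 then show ?thesis using key[OF i j] by simp
        next
          case 2 then show ?thesis using key[OF j i] by (simp add: abs_minus_commute add.commute)
        qed
      qed
    qed
  qed
qed

end
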